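(* Let $M_N$ satisfy Hypothesis (H) with parameter $(c,c')$ and let $\mathbf m=(m_\sigma)_{\sigma\in\mathfrak S_{2k}}$ in $(\mathcal A,\mathbb C\mathfrak S_k,\mathcal E)$ be the limit given by Theorem MainTh1, realized so that moreover $u_\eta m_\sigma u_{\eta'}^*=m_{(\eta\sqcup\eta')\sigma}$ in $\mathcal A$ for all $\sigma,\eta,\eta'$. Let $\phi(a)$ denote the coefficient of $u_{\mathrm{id}}$ in $\mathcal E(a)$. Set $$s_1=\frac{1}{\sqrt{(2k)!k!c}}\sum_{\sigma}m_\sigma,\quad s_2=\frac{1}{\sqrt{(2k)!k!c}}\sum_\sigma\mathrm{sg}(\sigma)m_\sigma,\quad s_3=\frac{1}{\sqrt{2(2k)!k!(c+\Re c')}}\sum_\sigma(m_\sigma+m_\sigma^* ),$$ the last one assuming $c+\Re c'>0$ (sums over $\sigma\in\mathfrak S_{2k}$, $\mathrm{sg}$ the signature). Then for every $\eta\in\mathfrak S_k$, $$\mathcal E(s_1u_\eta s_1^* )=\mathcal E(s_1^*u_\eta s_1)=\mathcal E(s_3u_\eta s_3)=\frac1{k!}\sum_{\eta'\in\mathfrak S_k}u_{\eta'},$$ $$\mathcal E(s_2u_\eta s_2^* )=\mathcal E(s_2^*u_\eta s_2)=\frac{\mathrm{sg}(\eta)}{k!}\sum_{\eta'\in\mathfrak S_k}\mathrm{sg}(\eta')u_{\eta'}.$$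
   Context: Fix $k\ge1$; $[n]=\{1,\dots,n\}$; $\mathfrak S_n$ is the symmetric group on $[n]$. Flattening: $M_{N,\sigma}((i_1,\dots,i_k),(i_{k+1},\dots,i_{2k}))=M_N(i_{\sigma(1)},\dots,i_{\sigma(2k)})$. Hypothesis (H) with parameter $(c,c')$: for each $N$ the entries of $M_N$ are i.i.d., distributed as a centered complex random variable $m_N$ with finite moments of all orders, and $N^k\mathbb E|m_N|^2\to c>0$, $N^k\mathbb E[m_N^2]\to c'\in\mathbb C$, and $N^k\mathbb E[m_N^{\ell_1}\overline{m_N}^{\ell_2}]\to0$ whenever $\ell_1+\ell_2>2$. $\mathbb C\mathfrak S_k$: group algebra with basis $(u_\eta)$, $u_\eta u_{\eta'}=u_{\eta\eta'}$, $u_\eta^*=u_{\eta^{-1}}$. $(\mathcal A,\mathbb C\mathfrak S_k,\mathcal E)$: unital $*$-algebra containing $\mathbb C\mathfrak S_k$, with $\mathcal E:\mathcal A\to\mathbb C\mathfrak S_k$ unital, completely positive, $\mathcal E(bab')=b\mathcal E(a)b'$. For $\eta,\eta'\in\mathfrak S_k$, $\eta\sqcup\eta'\in\mathfrak S_{2k}$ is $i\mapsto\eta(i)$ for $i\in[k]$, $i\mapsto\eta'(i-k)+k$ otherwise; $\tau\in\mathfrak S_{2k}$ swaps $i\leftrightarrow i+k$. Theorem MainTh1 provides a centered $\mathfrak S_k$-circular family $(m_\sigma)$, limit in $\mathfrak S_k^*$-distribution of the flattenings, with $\mathcal E(m_\sigma u_\eta m_{\sigma'}^* )=c\,u_{\eta'}$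 if $\sigma=(\eta'\sqcup\eta)\sigma'$ and $0$ if no such $\eta'$ exists; $\mathcal E(m_\sigma^*u_\eta m_{\sigma'})=c\,u_{\eta'}$ if $\sigma=(\eta\sqcup\eta')\sigma'$, else $0$; $\mathcal E(m_\sigma u_\eta m_{\sigma'})=c'u_{\eta'}$ if $\sigma=\tau(\eta\sqcup\eta')\sigma'$, else $0$. *)

theory Defs
  imports Complex_Main "HOL-Combinatorics.Permutations" "HOL-Library.Function_Algebras"
begin

text \<open>Permutations of [n] = {1..n} as functions nat => nat (identity outside [n]).\<close>
definition perms :: "nat \<Rightarrow> (nat \<Rightarrow> nat) set" where
  "perms n = {p. p permutes {1..n}}"

definition pjoin :: "nat \<Rightarrow> (nat \<Rightarrow> nat) \<Rightarrow> (nat \<Rightarrow> nat) \<Rightarrow> (nat \<Rightarrow> nat)" where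
  "pjoin k \<eta> \<eta>' = (\<lambda>i. if i \<in> {1..k} then \<eta> i
                        else if i \<in> {k+1..2*k} then \<eta>' (i - k) + k else i)"

definition ptau :: "nat \<Rightarrow> (nat \<Rightarrow> nat)" where
  "ptau k = (\<lambda>i. if i \<in> {1..k} then i + k else if i \<in> {k+1..2*k} then i - k else i)"

text \<open>Elements of the group algebra C S_k, represented by their coefficient functions
  (coefficient of u_eta at eta), supported on perms k.\<close>
type_synonym galg = "(nat \<Rightarrow> nat) \<Rightarrow> complex"

definition ga_supp :: "nat \<Rightarrow> galg \<Rightarrow> bool" where
  "ga_supp k f \<longleftrightarrow> (\<forall>\<eta>. \<eta> \<notin> perms k \<longrightarrow> f \<eta> = 0)"

definition ga_basis :: "nat \<Rightarrow> (nat \<Rightarrow> nat) \<Rightarrow> galg" where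
  "ga_basis k \<eta> = (\<lambda>\<eta>'. if \<eta>' = \<eta> \<and> \<eta> \<in> perms k then 1 else 0)"

text \<open>product: u_a u_b = u_(a o b)\<close>
definition ga_mult :: "nat \<Rightarrow> galg \<Rightarrow> galg \<Rightarrow> galg" where
  "ga_mult k f g = (\<lambda>\<eta>. if \<eta> \<in> perms k then (\<Sum>a\<in>perms k. f a * g (inv a \<circ> \<eta>)) else 0)"

definition ga_star :: "nat \<Rightarrow> galg \<Rightarrow> galg" where
  "ga_star k f = (\<lambda>\<eta>. if \<eta> \<in> perms k then cnj (f (inv \<eta>)) else 0)"

definition ga_scale :: "complex \<Rightarrow> galg \<Rightarrow> galg" where
  "ga_scale a f = (\<lambda>\<eta>. a * f \<eta>)"

text \<open>positive elements of the finite-dimensional C*-algebra C S_k: finite sums of y^* y\<close>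
definition ga_pos :: "nat \<Rightarrow> galg \<Rightarrow> bool" where
  "ga_pos k x \<longleftrightarrow> (\<exists>ys. x = sum_list (map (\<lambda>y. ga_mult k (ga_star k y) y) ys))"

definition star_algebra :: "(complex \<Rightarrow> 'a::ring_1 \<Rightarrow> 'a) \<Rightarrow> ('a \<Rightarrow> 'a) \<Rightarrow> bool" where
  "star_algebra scC st \<longleftrightarrow>
     (\<forall>a x y. scC a (x + y) = scC a x + scC a y) \<and>
     (\<forall>a b x. scC (a + b) x = scC a x + scC b x) \<and>
     (\<forall>a b x. scC (a * b) x = scC a (scC b x)) \<and>
     (\<forall>x. scC 1 x = x) \<and>
     (\<forall>a x y. scC a (x * y) = scC a x * y \<and> scC a (x * y) = x * scC a y) \<and>
     (\<forall>x y. st (x + y) = st x + st y) \<and>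
     (\<forall>a x. st (scC a x) = scC (cnj a) (st x)) \<and>
     (\<forall>x y. st (x * y) = st y * st x) \<and>
     (\<forall>x. st (st x) = x)"

definition ga_emb :: "nat \<Rightarrow> (complex \<Rightarrow> 'a::ring_1 \<Rightarrow> 'a) \<Rightarrow> ((nat \<Rightarrow> nat) \<Rightarrow> 'a) \<Rightarrow> galg \<Rightarrow> 'a" where
  "ga_emb k scC u g = (\<Sum>\<eta>\<in>perms k. scC (g \<eta>) (u \<eta>))"

definition contains_group_algebra ::
  "nat \<Rightarrow> (complex \<Rightarrow> 'a::ring_1 \<Rightarrow> 'a) \<Rightarrow> ('a \<Rightarrow> 'a) \<Rightarrow> ((nat \<Rightarrow> nat) \<Rightarrow> 'a) \<Rightarrow> bool" where
  "contains_group_algebra k scC st u \<longleftrightarrow>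
     u id = 1 \<and>
     (\<forall>\<eta>\<in>perms k. \<forall>\<eta>'\<in>perms k. u (\<eta> \<circ> \<eta>') = u \<eta> * u \<eta>') \<and>
     (\<forall>\<eta>\<in>perms k. st (u \<eta>) = u (inv \<eta>)) \<and>
     (\<forall>g. ga_supp k g \<longrightarrow> ga_emb k scC u g = 0 \<longrightarrow> g = (\<lambda>_. 0))"

text \<open>Complete positivity (into the C*-algebra C S_k) in the standard form:
  sum_{i,j} b_i^* E(a_i^* a_j) b_j >= 0 for all finite families.\<close>
definition cond_exp ::
  "nat \<Rightarrow> (complex \<Rightarrow> 'a::ring_1 \<Rightarrow> 'a) \<Rightarrow> ('a \<Rightarrow> 'a) \<Rightarrow> ((nat \<Rightarrow> nat) \<Rightarrow> 'a) \<Rightarrow> ('a \<Rightarrow> galg) \<Rightarrow> bool" where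
  "cond_exp k scC st u E \<longleftrightarrow>
     (\<forall>x. ga_supp k (E x)) \<and>
     (\<forall>x y. E (x + y) = E x + E y) \<and>
     (\<forall>a x. E (scC a x) = ga_scale a (E x)) \<and>
     E 1 = ga_basis k id \<and>
     (\<forall>g g' x. ga_supp k g \<longrightarrow> ga_supp k g' \<longrightarrow>
        E (ga_emb k scC u g * x * ga_emb k scC u g') = ga_mult k (ga_mult k g (E x)) g') \<and>
     (\<forall>(n::nat) (as::nat \<Rightarrow> 'a) (bs::nat \<Rightarrow> galg). (\<forall>i. ga_supp k (bs i)) \<longrightarrow>
        ga_pos k (\<Sum>i<n. \<Sum>j<n. ga_mult k (ga_mult k (ga_star k (bs i)) (E (st (as i) * as j))) (bs j)))"

end

theory Submission
  imports Defs
begin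


lemma sum_fun_apply: "(sum f A) x = (\<Sum>a\<in>A. f a x)"
  by (induction A rule: infinite_finite_induct) auto

lemma perms_finite: "finite (perms n)"
  unfolding perms_def by (simp add: finite_permutations)

lemma card_perms: "card (perms n) = fact n"
  unfolding perms_def by (simp add: card_permutations)

lemma ptau_invol: "ptau k \<circ> ptau k = id"
  by (auto simp: ptau_def fun_eq_iff)

lemma ptau_permutes: "ptau k permutes {1..2*k}"
  unfolding permutes_def
proof (intro conjI allI impI)
  fix x :: nat assume "x \<notin> {1..2*k}" thus "ptau k x = x" by (auto simp: ptau_def)
next
  fix y
  have inv: "\<And>z. ptau k (ptau k z) = z" using ptau_invol by (metis comp_apply id_apply)
  show "\<exists>!x. ptau k x = y" by (metis inv)
qed

lemma perms_permutes: "\<eta> \<in> perms k \<Longrightarrow> \<eta> permutes {1..k}" by (simp add: perms_def)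

lemma perms_sub: "\<eta> \<in> perms k \<Longrightarrow> \<eta> permutes {1..2*k}"
  by (rule permutes_subset[of _ "{1..k}"]) (auto simp: perms_def)

lemma pjoin_eq:
  assumes "\<eta>' \<in> perms k" "\<eta> \<in> perms k"
  shows "pjoin k \<eta>' \<eta> = \<eta>' \<circ> ptau k \<circ> \<eta> \<circ> ptau k"
proof (rule ext)
  fix i
  have p: "\<eta> permutes {1..k}" "\<eta>' permutes {1..k}" using assms by (auto simp: perms_def)
  have a: "\<And>x. x \<notin> {1..k} \<Longrightarrow> \<eta> x = x" "\<And>x. x\<notin>{1..k} \<Longrightarrow> \<eta>' x = x"
    using p permutes_not_in by metis+
  have b: "\<And>x. x\<in>{1..k} \<Longrightarrow> \<eta> x \<in> {1..k}" using p permutes_in_image by metis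
  show "pjoin k \<eta>' \<eta> i = (\<eta>' \<circ> ptau k \<circ> \<eta> \<circ> ptau k) i"
  proof (cases "i \<in> {1..k}")
    case True
    then show ?thesis using a by (auto simp: pjoin_def ptau_def)
  next
    case F: False
    show ?thesis
    proof (cases "i \<in> {k+1..2*k}")
      case True
      hence "i - k \<in> {1..k}" by auto
      hence "\<eta> (i-k) \<in> {1..k}" by (rule b)
      then show ?thesis using F True a by (auto simp: pjoin_def ptau_def)
    next
      case False
      then show ?thesis using F a by (auto simp: pjoin_def ptau_def)
    qed
  qed
qed

lemma perm_permutation: "\<eta> \<in> perms k \<Longrightarrow> permutation \<eta>"
  using perms_permutes permutation_permutes by blast

lemma ptau_permutation: "permutation (ptau k)"
  using ptau_permutes permutation_permutes by blast

lemma sign_pjoin: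
  assumes "\<eta>' \<in> perms k" "\<eta> \<in> perms k"
  shows "sign (pjoin k \<eta>' \<eta>) = sign \<eta>' * sign \<eta>"
  using assms
  by (simp add: pjoin_eq sign_compose perm_permutation ptau_permutation permutation_compose)

lemma pjoin_perms:
  assumes "\<eta>' \<in> perms k" "\<eta> \<in> perms k"
  shows "pjoin k \<eta>' \<eta> \<in> perms (2*k)"
  unfolding pjoin_eq[OF assms] perms_def mem_Collect_eq
  by (intro permutes_compose perms_sub ptau_permutes assms)

lemma comp_perms: "a \<in> perms n \<Longrightarrow> b \<in> perms n \<Longrightarrow> a \<circ> b \<in> perms n"
  by (simp add: perms_def permutes_compose)

lemma ptau_perms: "ptau k \<in> perms (2*k)" unfolding perms_def mem_Collect_eq by (rule ptau_permutes)

lemma cancel_LR: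
  assumes "inj L" "surj R" "L \<circ> a \<circ> R = L \<circ> b \<circ> R"
  shows "a = b"
proof (rule ext)
  fix x obtain y where y: "x = R y" using assms(2) by (metis surjD)
  have "L (a (R y)) = L (b (R y))" using assms(3) by (metis comp_apply)
  thus "a x = b x" using y assms(1) by (simp add: inj_eq)
qed

lemma perm_bij: "\<eta> \<in> perms k \<Longrightarrow> bij \<eta>" using perms_permutes permutes_bij by blast
lemma ptau_bij: "bij (ptau k)" using ptau_permutes permutes_bij by blast

lemma sum_pick:
  fixes F :: "'b \<Rightarrow> 'c::comm_monoid_add"
  assumes "finite B" "g ` A \<subseteq> B" "inj_on g A"
    and "\<And>a. a \<in> A \<Longrightarrow> F (g a) = h a"
    and "\<And>b. b \<in> B \<Longrightarrow> b \<notin> g ` A \<Longrightarrow> F b = 0"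
  shows "sum F B = sum h A"
proof -
  have "sum F B = sum F (B - g ` A) + sum F (g ` A)"
    by (rule sum.subset_diff[OF assms(2,1)])
  also have "sum F (B - g`A) = 0" using assms(5) by (intro sum.neutral) auto
  also have "sum F (g`A) = sum (F \<circ> g) A" by (rule sum.reindex[OF assms(3)])
  also have "\<dots> = sum h A" by (rule sum.cong) (auto simp: assms(4))
  finally show ?thesis by simp
qed

lemma basis_sum:
  "(\<Sum>\<eta>'\<in>perms k. ga_scale (\<gamma> \<eta>') (ga_basis k \<eta>')) = (\<lambda>\<xi>. if \<xi> \<in> perms k then \<gamma> \<xi> else 0)"
proof (rule ext)
  fix \<xi>
  show "(\<Sum>\<eta>'\<in>perms k. ga_scale (\<gamma> \<eta>') (ga_basis k \<eta>')) \<xi> = (if \<xi> \<in> perms k then \<gamma> \<xi> else 0)"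
    by (simp add: sum_fun_apply ga_scale_def ga_basis_def perms_finite if_distrib cong: if_cong)
qed



context
  fixes scC :: "complex \<Rightarrow> 'a::ring_1 \<Rightarrow> 'a" and st :: "'a \<Rightarrow> 'a"
  assumes alg: "star_algebra scC st"
begin

lemma scC_add: "scC a (x + y) = scC a x + scC a y" using alg by (simp add: star_algebra_def)
lemma scC_comp: "scC a (scC b x) = scC (a*b) x" using alg by (simp add: star_algebra_def)
lemma scC_one: "scC 1 x = x" using alg by (simp add: star_algebra_def)
lemma scC_ml: "scC a x * y = scC a (x * y)" using alg by (simp add: star_algebra_def)
lemma scC_mr: "x * scC a y = scC a (x * y)" using alg unfolding star_algebra_def by metis
lemma st_add: "st (x + y) = st x + st y" using alg by (simp add: star_algebra_def)
lemma st_scC: "st (scC a x) = scC (cnj a) (st x)" using alg by (simp add: star_algebra_def)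
lemma st_mult: "st (x * y) = st y * st x" using alg by (simp add: star_algebra_def)
lemma st_st: "st (st x) = x" using alg by (simp add: star_algebra_def)

lemma scC_zero: "scC a 0 = 0"
  using scC_add[of a 0 0] by simp
lemma st_zero: "st 0 = 0"
  using st_add[of 0 0] by simp
lemma st_one: "st 1 = 1"
  by (metis mult_1_right st_mult st_st)
lemma scC_sum: "scC a (sum f A) = (\<Sum>x\<in>A. scC a (f x))"
  by (induction A rule: infinite_finite_induct) (auto simp: scC_zero scC_add)
lemma st_sum: "st (sum f A) = (\<Sum>x\<in>A. st (f x))"
  by (induction A rule: infinite_finite_induct) (auto simp: st_zero st_add)

lemma expand:
  "scC r (\<Sum>\<sigma>\<in>A. scC (\<alpha> \<sigma>) (f \<sigma>)) * w * scC r' (\<Sum>\<sigma>'\<in>B. scC (\<beta> \<sigma>') (g \<sigma>'))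
   = scC (r*r') (\<Sum>\<sigma>\<in>A. \<Sum>\<sigma>'\<in>B. scC (\<alpha> \<sigma> * \<beta> \<sigma>') (f \<sigma> * w * g \<sigma>'))"
proof -
  have "scC r X * w * scC r' Y = scC (r*r') (X * w * Y)" for X Y
    by (simp add: scC_ml scC_mr scC_comp mult.commute)
  moreover have "(\<Sum>\<sigma>\<in>A. scC (\<alpha> \<sigma>) (f \<sigma>)) * w * (\<Sum>\<sigma>'\<in>B. scC (\<beta> \<sigma>') (g \<sigma>'))
     = (\<Sum>\<sigma>\<in>A. \<Sum>\<sigma>'\<in>B. scC (\<alpha> \<sigma> * \<beta> \<sigma>') (f \<sigma> * w * g \<sigma>'))"
  proof -
    have "(\<Sum>\<sigma>\<in>A. scC (\<alpha> \<sigma>) (f \<sigma>)) * w * (\<Sum>\<sigma>'\<in>B. scC (\<beta> \<sigma>') (g \<sigma>'))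
      = (\<Sum>\<sigma>\<in>A. \<Sum>\<sigma>'\<in>B. (scC (\<alpha> \<sigma>) (f \<sigma>) * w) * scC (\<beta> \<sigma>') (g \<sigma>'))"
      by (simp add: sum_distrib_right sum_distrib_left mult.assoc) (rule sum.swap)
    also have "\<dots> = (\<Sum>\<sigma>\<in>A. \<Sum>\<sigma>'\<in>B. scC (\<alpha> \<sigma> * \<beta> \<sigma>') (f \<sigma> * w * g \<sigma>'))"
      by (simp add: scC_ml scC_mr scC_comp mult.commute)
    finally show ?thesis .
  qed
  ultimately show ?thesis by simp
qed

lemma st_form: "st (scC r (\<Sum>\<sigma>\<in>A. scC (\<alpha> \<sigma>) (f \<sigma>))) = scC (cnj r) (\<Sum>\<sigma>\<in>A. scC (cnj (\<alpha> \<sigma>)) (st (f \<sigma>)))"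
  by (simp add: st_scC st_sum)

end

context
  fixes k and scC :: "complex \<Rightarrow> 'a::ring_1 \<Rightarrow> 'a" and st :: "'a \<Rightarrow> 'a" and u and E
  assumes E: "cond_exp k scC st u E"
begin

lemma E_add: "E (x + y) = E x + E y" using E by (simp add: cond_exp_def)
lemma E_scC: "E (scC a x) = ga_scale a (E x)" using E by (simp add: cond_exp_def)
lemma E_one: "E 1 = ga_basis k id" using E by (simp add: cond_exp_def)
lemma E_supp: "\<eta> \<notin> perms k \<Longrightarrow> E x \<eta> = 0" using E by (simp add: cond_exp_def ga_supp_def)
lemma E_zero: "E 0 = 0" using E_add[of 0 0] by simp
lemma E_sum: "E (sum f A) = (\<Sum>x\<in>A. E (f x))"
  by (induction A rule: infinite_finite_induct) (auto simp: E_zero E_add)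

lemma E_cp: "\<forall>(n::nat) (as::nat \<Rightarrow> 'a) (bs::nat \<Rightarrow> galg). (\<forall>i. ga_supp k (bs i)) \<longrightarrow>
        ga_pos k (\<Sum>i<n. \<Sum>j<n. ga_mult k (ga_mult k (ga_star k (bs i)) (E (st (as i) * as j))) (bs j))"
  using E by (simp add: cond_exp_def)

end

definition herm :: "nat \<Rightarrow> galg \<Rightarrow> bool" where
  "herm k X \<longleftrightarrow> (\<forall>\<eta>\<in>perms k. cnj (X (inv \<eta>)) = X \<eta>)"

lemma perms_inv: "\<eta> \<in> perms k \<Longrightarrow> inv \<eta> \<in> perms k"
  by (simp add: perms_def permutes_inv)

lemma herm_mult: "herm k (ga_mult k (ga_star k y) y)"
  unfolding herm_def
proof
  fix \<eta> assume h: "\<eta> \<in> perms k"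
  have ih: "inv \<eta> \<in> perms k" using h by (rule perms_inv)
  have L: "cnj (ga_mult k (ga_star k y) y (inv \<eta>)) = (\<Sum>a\<in>perms k. y (inv a) * cnj (y (inv a \<circ> inv \<eta>)))"
    using ih by (simp add: ga_mult_def ga_star_def)
  have R: "ga_mult k (ga_star k y) y \<eta> = (\<Sum>b\<in>perms k. cnj (y (inv b)) * y (inv b \<circ> \<eta>))"
    using h by (simp add: ga_mult_def ga_star_def)
  also have "\<dots> = (\<Sum>a\<in>perms k. cnj (y (inv (\<eta> \<circ> a))) * y (inv (\<eta> \<circ> a) \<circ> \<eta>))"
  proof -
    have c1: "\<And>b. \<eta> \<circ> (inv \<eta> \<circ> b) = b"
      using h by (metis o_assoc permutes_inv_o(1) id_comp perms_permutes)
    have c2: "\<And>a. inv \<eta> \<circ> (\<eta> \<circ> a) = a"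
      using h by (metis o_assoc permutes_inv_o(2) id_comp perms_permutes)
    show ?thesis
      by (rule sum.reindex_bij_witness[of _ "\<lambda>a. \<eta> \<circ> a" "\<lambda>b. inv \<eta> \<circ> b"])
         (auto simp: c1 c2 intro: comp_perms h ih)
  qed
  also have "\<dots> = (\<Sum>a\<in>perms k. cnj (y (inv a \<circ> inv \<eta>)) * y (inv a))"
  proof (rule sum.cong)
    fix a assume a: "a \<in> perms k"
    have "inv (\<eta> \<circ> a) = inv a \<circ> inv \<eta>" using a h by (simp add: o_inv_distrib perm_bij)
    moreover have "inv a \<circ> inv \<eta> \<circ> \<eta> = inv a"
      using h by (simp add: o_assoc[symmetric]) (metis perms_permutes permutes_inv_o(2) comp_id o_assoc)
    ultimately show "cnj (y (inv (\<eta> \<circ> a))) * y (inv (\<eta> \<circ> a) \<circ> \<eta>) = cnj (y (inv a \<circ> inv \<eta>)) * y (inv a)"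
      by simp
  qed simp
  finally show "cnj (ga_mult k (ga_star k y) y (inv \<eta>)) = ga_mult k (ga_star k y) y \<eta>"
    using L by (simp add: mult.commute)
qed

lemma herm_pos: "ga_pos k X \<Longrightarrow> herm k X"
proof -
  have "herm k (sum_list (map (\<lambda>y. ga_mult k (ga_star k y) y) ys))" for ys
    by (induction ys) (auto simp: herm_def herm_mult[unfolded herm_def])
  thus "ga_pos k X \<Longrightarrow> herm k X" by (auto simp: ga_pos_def)
qed



lemma id_perms: "id \<in> perms k" by (simp add: perms_def permutes_id)

lemma inv_eq_id: "\<eta> \<in> perms k \<Longrightarrow> inv \<eta> = id \<longleftrightarrow> \<eta> = id"
  by (metis inv_id perms_permutes permutes_inv_inv)

lemma star_basis_id: "ga_star k (ga_basis k id) = ga_basis k id"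
  by (rule ext) (auto simp: ga_star_def ga_basis_def inv_eq_id id_perms)

lemma mult_basis_left: "ga_supp k X \<Longrightarrow> ga_mult k (ga_basis k id) X = X"
proof (rule ext)
  fix \<eta> assume s: "ga_supp k X"
  show "ga_mult k (ga_basis k id) X \<eta> = X \<eta>"
  proof (cases "\<eta> \<in> perms k")
    case True
    have "ga_mult k (ga_basis k id) X \<eta> = (\<Sum>a\<in>perms k. if a = id then X \<eta> else 0)"
      using True by (auto simp: ga_mult_def ga_basis_def id_perms intro!: sum.cong)
    also have "\<dots> = X \<eta>" by (simp add: perms_finite id_perms)
    finally show ?thesis .
  qed (use s in \<open>auto simp: ga_mult_def ga_supp_def\<close>)
qed

lemma inv_comp_id: "a \<in> perms k \<Longrightarrow> \<eta> \<in> perms k \<Longrightarrow> inv a \<circ> \<eta> = id \<longleftrightarrow> a = \<eta>"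
  by (metis o_assoc perms_permutes permutes_inv_o(1) id_comp comp_id permutes_inv_o(2))

lemma mult_basis_right: "ga_supp k X \<Longrightarrow> ga_mult k X (ga_basis k id) = X"
proof (rule ext)
  fix \<eta> assume s: "ga_supp k X"
  show "ga_mult k X (ga_basis k id) \<eta> = X \<eta>"
  proof (cases "\<eta> \<in> perms k")
    case True
    have "ga_mult k X (ga_basis k id) \<eta> = (\<Sum>a\<in>perms k. if a = \<eta> then X a else 0)"
      using True by (auto simp: ga_mult_def ga_basis_def id_perms inv_comp_id intro!: sum.cong)
    also have "\<dots> = X \<eta>" using True by (simp add: perms_finite)
    finally show ?thesis .
  qed (use s in \<open>auto simp: ga_mult_def ga_supp_def\<close>)
qed

lemma lin_solve: "(p::complex) + q = a + b \<Longrightarrow> q - p = a - b \<Longrightarrow> b = p"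
proof -
  assume e1: "p + q = a + b" and e2: "q - p = a - b"
  have "(p + q) - (q - p) = (a + b) - (a - b)" using e1 e2 by simp
  hence "2 * p = 2 * b" by (simp add: algebra_simps)
  thus "b = p" by simp
qed

context
  fixes k and scC :: "complex \<Rightarrow> 'a::ring_1 \<Rightarrow> 'a" and st :: "'a \<Rightarrow> 'a" and u and E
  assumes E: "cond_exp k scC st u E" and alg: "star_algebra scC st"
begin

lemma E_supp': "ga_supp k (E x)" using E by (simp add: cond_exp_def)

lemma E_pos_herm: "herm k (E (st a * a))"
proof -
  have cp: "\<And>n (as::nat\<Rightarrow>'a) bs. (\<And>i. ga_supp k (bs i)) \<Longrightarrow>
        ga_pos k (\<Sum>i<n. \<Sum>j<n. ga_mult k (ga_mult k (ga_star k (bs i)) (E (st (as i) * as j))) (bs j))"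
    using E_cp[OF E] by blast
  have sb: "\<And>i. ga_supp k ((\<lambda>_. ga_basis k id) i)" by (simp add: ga_supp_def ga_basis_def)
  have l1: "{..<(1::nat)} = {0}" by auto
  have "ga_pos k (ga_mult k (ga_mult k (ga_star k (ga_basis k id)) (E (st a * a))) (ga_basis k id))"
    using cp[where bs="\<lambda>_. ga_basis k id" and as = "\<lambda>_. a" and n=1, OF sb] by (simp add: l1)
  hence "ga_pos k (E (st a * a))"
    by (simp add: star_basis_id mult_basis_left mult_basis_right E_supp')
  thus ?thesis by (rule herm_pos)
qed

lemma E_star: "\<eta> \<in> perms k \<Longrightarrow> E (st x) \<eta> = cnj (E x (inv \<eta>))"
proof -
  assume h: "\<eta> \<in> perms k"
  define A where "A = E x"
  define B where "B = E (st x)"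
  define C where "C = E (st x * x)"
  define D where "D = E 1"
  have hC: "cnj (C (inv \<eta>)) = C \<eta>" using E_pos_herm[of x] h by (simp add: herm_def C_def)
  have hD: "cnj (D (inv \<eta>)) = D \<eta>" using E_pos_herm[of 1] h by (simp add: herm_def D_def st_one[OF alg])
  have key: "cnj (t * A (inv \<eta>) + cnj t * B (inv \<eta>)) = t * A \<eta> + cnj t * B \<eta>" for t
  proof -
    have w: "st (1 + scC t x) * (1 + scC t x) = 1 + scC t x + scC (cnj t) (st x) + scC (cnj t * t) (st x * x)"
    proof -
      have st1: "st (1 + scC t x) = 1 + scC (cnj t) (st x)"
        by (simp add: st_add[OF alg] st_one[OF alg] st_scC[OF alg])
      have d: "(1 + p) * (1 + q) = 1 + q + p + p * q" for p q :: 'a by (simp add: algebra_simps)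
      have pq: "scC (cnj t) (st x) * scC t x = scC (cnj t * t) (st x * x)"
        by (simp add: scC_ml[OF alg] scC_mr[OF alg] scC_comp[OF alg] mult.commute)
      show ?thesis unfolding st1 d pq ..
    qed
    have "herm k (E (st (1 + scC t x) * (1 + scC t x)))" by (rule E_pos_herm)
    hence "cnj ((D + ga_scale t A + ga_scale (cnj t) B + ga_scale (cnj t * t) C) (inv \<eta>))
         = (D + ga_scale t A + ga_scale (cnj t) B + ga_scale (cnj t * t) C) \<eta>"
      using h unfolding w by (simp add: herm_def E_add[OF E] E_scC[OF E] A_def B_def C_def D_def)
    thus ?thesis using hC hD by (simp add: ga_scale_def)
  qed
  have e1: "cnj (A (inv \<eta>)) + cnj (B (inv \<eta>)) = A \<eta> + B \<eta>" using key[of 1] by simp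
  have e2: "\<i> * (cnj (B (inv \<eta>)) - cnj (A (inv \<eta>))) = \<i> * (A \<eta> - B \<eta>)"
    using key[of \<i>] by (simp add: algebra_simps)
  hence "cnj (B (inv \<eta>)) - cnj (A (inv \<eta>)) = A \<eta> - B \<eta>" by simp
  with e1 have "B \<eta> = cnj (A (inv \<eta>))"
    by (rule lin_solve)
  thus ?thesis by (simp add: A_def B_def)
qed

end


lemma ga_scale_one [simp]: "ga_scale 1 f = f" by (simp add: ga_scale_def)
lemma ga_scale_zero: "ga_scale a (\<lambda>_. 0) = 0" by (simp add: ga_scale_def zero_fun_def)
lemma ga_scale_scale: "ga_scale a (ga_scale b f) = ga_scale (a*b) f" by (simp add: ga_scale_def mult.assoc)
lemma ga_star_zero: "ga_star k (\<lambda>_. 0) = 0" by (rule ext) (simp add: ga_star_def)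

lemma ga_star_basis:
  assumes "\<eta> \<in> perms k"
  shows "ga_star k (ga_scale a (ga_basis k \<eta>)) = ga_scale (cnj a) (ga_basis k (inv \<eta>))"
proof (rule ext)
  fix \<xi>
  have i: "inv \<eta> \<in> perms k" using assms by (rule perms_inv)
  have "\<xi> \<in> perms k \<Longrightarrow> inv \<xi> = \<eta> \<longleftrightarrow> \<xi> = inv \<eta>"
    using assms by (metis perms_permutes permutes_inv_inv)
  thus "ga_star k (ga_scale a (ga_basis k \<eta>)) \<xi> = ga_scale (cnj a) (ga_basis k (inv \<eta>)) \<xi>"
    using assms i by (auto simp: ga_star_def ga_scale_def ga_basis_def)
qed

lemma perms_inv_inv: "a \<in> perms k \<Longrightarrow> inv (inv a) = a"
  using perms_permutes permutes_inv_inv by blast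

lemma basis_inv_sum:
  "(\<Sum>\<eta>\<in>perms k. ga_scale a (ga_basis k (inv \<eta>))) = (\<Sum>\<eta>\<in>perms k. ga_scale a (ga_basis k \<eta>))"
  by (rule sum.reindex_bij_witness[of _ inv inv]) (auto simp: perms_inv perms_inv_inv)

lemma const_sum:
  "ga_scale R (\<Sum>\<sigma>'\<in>perms n. (\<lambda>\<xi>. if \<xi> \<in> perms k then v \<xi> else 0))
   = (\<lambda>\<xi>. if \<xi> \<in> perms k then R * (fact n * v \<xi>) else 0)"
  unfolding ga_scale_def sum_fun_apply by (simp add: card_perms fun_eq_iff)

lemma E_star_fun:
  assumes E: "cond_exp k scC st u E" and alg: "star_algebra scC st"
  shows "E (st x) = ga_star k (E x)"
proof (rule ext)
  fix \<xi> show "E (st x) \<xi> = ga_star k (E x) \<xi>"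
    using E_star[OF E alg] E_supp[OF E] by (simp add: ga_star_def)
qed

lemma cancel_R: "surj R \<Longrightarrow> a \<circ> R = b \<circ> R \<Longrightarrow> a = b"
  using cancel_LR[of id R a b] by simp

lemma num:
  fixes X N M C :: real and a :: complex
  assumes "X = N * M * C" "N > 0" "M > 0" "C > 0"
  shows "complex_of_real (1 / sqrt X) * complex_of_real (1 / sqrt X) * (complex_of_real N * (a * complex_of_real C)) = a / complex_of_real M"
proof -
  define r where "r = 1 / sqrt X"
  have X: "X > 0" using assms by simp
  have "r * r = 1 / (sqrt X * sqrt X)" by (simp add: r_def)
  also have "sqrt X * sqrt X = X" using X by simp
  finally have rr: "r * r = 1 / X" .
  have "r * r * (N * C) = 1 / M"
    unfolding rr assms(1) using assms(2-4) by (simp add: field_simps)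
  hence e: "complex_of_real (r * r * (N * C)) = complex_of_real (1/M)" by simp
  have "complex_of_real r * complex_of_real r * (complex_of_real N * (a * complex_of_real C))
      = a * complex_of_real (r * r * (N * C))" by (simp only: of_real_mult) (simp add: algebra_simps)
  also have "\<dots> = a / complex_of_real M" unfolding e by (simp add: of_real_divide)
  finally show ?thesis unfolding r_def .
qed

lemma numf:
  fixes C :: real and a :: complex
  assumes "X = fact N * fact M * C" "C > 0"
  shows "complex_of_real (1 / sqrt X) * complex_of_real (1 / sqrt X) * (fact N * (a * complex_of_real C)) = a / fact M"
  using num[OF assms(1) _ _ assms(2), of a] by simp



theorem mainTheorem13:
  fixes k :: nat and c :: real and c' :: complex
    and scC :: "complex \<Rightarrow> 'a::ring_1 \<Rightarrow> 'a" and st :: "'a \<Rightarrow> 'a"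
    and u :: "(nat \<Rightarrow> nat) \<Rightarrow> 'a" and E :: "'a \<Rightarrow> galg"
    and m :: "(nat \<Rightarrow> nat) \<Rightarrow> 'a"
    and s1 s2 s3 :: 'a
  assumes k: "k \<ge> 1"
    and c_pos: "c > 0"
    and alg: "star_algebra scC st"
    and contains: "contains_group_algebra k scC st u"
    and E: "cond_exp k scC st u E"
    \<comment> \<open>centered\<close>
    and centered: "\<forall>\<sigma>\<in>perms (2*k). E (m \<sigma>) = (\<lambda>_. 0)"
    \<comment> \<open>covariance of the limit family given by Theorem MainTh1\<close>
    and cov1: "\<forall>\<sigma>\<in>perms (2*k). \<forall>\<sigma>'\<in>perms (2*k). \<forall>\<eta>\<in>perms k.
        (\<forall>\<eta>'\<in>perms k. \<sigma> = pjoin k \<eta>' \<eta> \<circ> \<sigma>' \<longrightarrow>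
           E (m \<sigma> * u \<eta> * st (m \<sigma>')) = ga_scale (complex_of_real c) (ga_basis k \<eta>')) \<and>
        ((\<nexists>\<eta>'. \<eta>' \<in> perms k \<and> \<sigma> = pjoin k \<eta>' \<eta> \<circ> \<sigma>') \<longrightarrow>
           E (m \<sigma> * u \<eta> * st (m \<sigma>')) = (\<lambda>_. 0))"
    and cov2: "\<forall>\<sigma>\<in>perms (2*k). \<forall>\<sigma>'\<in>perms (2*k). \<forall>\<eta>\<in>perms k.
        (\<forall>\<eta>'\<in>perms k. \<sigma> = pjoin k \<eta> \<eta>' \<circ> \<sigma>' \<longrightarrow>
           E (st (m \<sigma>) * u \<eta> * m \<sigma>') = ga_scale (complex_of_real c) (ga_basis k \<eta>')) \<and>
        ((\<nexists>\<eta>'. \<eta>' \<in> perms k \<and> \<sigma> = pjoin k \<eta> \<eta>' \<circ> \<sigma>') \<longrightarrow>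
           E (st (m \<sigma>) * u \<eta> * m \<sigma>') = (\<lambda>_. 0))"
    and cov3: "\<forall>\<sigma>\<in>perms (2*k). \<forall>\<sigma>'\<in>perms (2*k). \<forall>\<eta>\<in>perms k.
        (\<forall>\<eta>'\<in>perms k. \<sigma> = ptau k \<circ> pjoin k \<eta> \<eta>' \<circ> \<sigma>' \<longrightarrow>
           E (m \<sigma> * u \<eta> * m \<sigma>') = ga_scale c' (ga_basis k \<eta>')) \<and>
        ((\<nexists>\<eta>'. \<eta>' \<in> perms k \<and> \<sigma> = ptau k \<circ> pjoin k \<eta> \<eta>' \<circ> \<sigma>') \<longrightarrow>
           E (m \<sigma> * u \<eta> * m \<sigma>') = (\<lambda>_. 0))"
    \<comment> \<open>the additional equivariance of the realization\<close>
    and equiv: "\<forall>\<sigma>\<in>perms (2*k). \<forall>\<eta>\<in>perms k. \<forall>\<eta>'\<in>perms k.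
        u \<eta> * m \<sigma> * st (u \<eta>') = m (pjoin k \<eta> \<eta>' \<circ> \<sigma>)"
    and s1: "s1 = scC (complex_of_real (1 / sqrt (fact (2*k) * fact k * c)))
                  (\<Sum>\<sigma>\<in>perms (2*k). m \<sigma>)"
    and s2: "s2 = scC (complex_of_real (1 / sqrt (fact (2*k) * fact k * c)))
                  (\<Sum>\<sigma>\<in>perms (2*k). scC (of_int (sign \<sigma>)) (m \<sigma>))"
    and s3: "s3 = scC (complex_of_real (1 / sqrt (2 * fact (2*k) * fact k * (c + Re c'))))
                  (\<Sum>\<sigma>\<in>perms (2*k). m \<sigma> + st (m \<sigma>))"
  shows "\<forall>\<eta>\<in>perms k.
      E (s1 * u \<eta> * st s1) = (\<Sum>\<eta>'\<in>perms k. ga_scale (1 / fact k) (ga_basis k \<eta>')) \<and>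
      E (st s1 * u \<eta> * s1) = (\<Sum>\<eta>'\<in>perms k. ga_scale (1 / fact k) (ga_basis k \<eta>')) \<and>
      (c + Re c' > 0 \<longrightarrow>
         E (s3 * u \<eta> * s3) = (\<Sum>\<eta>'\<in>perms k. ga_scale (1 / fact k) (ga_basis k \<eta>'))) \<and>
      E (s2 * u \<eta> * st s2) =
         (\<Sum>\<eta>'\<in>perms k. ga_scale (of_int (sign \<eta>) * of_int (sign \<eta>') / fact k) (ga_basis k \<eta>')) \<and>
      E (st s2 * u \<eta> * s2) =
         (\<Sum>\<eta>'\<in>perms k. ga_scale (of_int (sign \<eta>) * of_int (sign \<eta>') / fact k) (ga_basis k \<eta>'))"
proof (intro ballI)
  fix \<eta> assume h\<eta>: "\<eta> \<in> perms k"
  define P where "P = perms k"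
  define Q where "Q = perms (2*k)"
  have hP: "\<eta> \<in> P" using h\<eta> by (simp add: P_def)
  have finQ: "finite Q" by (simp add: Q_def perms_finite)
  have ih\<eta>: "inv \<eta> \<in> P" using h\<eta> by (simp add: P_def perms_inv)
  have c1a: "E (m \<sigma> * u \<eta>0 * st (m \<sigma>')) = ga_scale (complex_of_real c) (ga_basis k \<eta>')"
    if "\<sigma> \<in> Q" "\<sigma>' \<in> Q" "\<eta>0 \<in> P" "\<eta>' \<in> P" "\<sigma> = pjoin k \<eta>' \<eta>0 \<circ> \<sigma>'" for \<sigma> \<sigma>' \<eta>0 \<eta>'
    using cov1 that unfolding P_def Q_def by blast
  have c1b: "E (m \<sigma> * u \<eta>0 * st (m \<sigma>')) = (\<lambda>_. 0)"
    if "\<sigma> \<in> Q" "\<sigma>' \<in> Q" "\<eta>0 \<in> P" "\<forall>\<eta>'\<in>P. \<sigma> \<noteq> pjoin k \<eta>' \<eta>0 \<circ> \<sigma>'" for \<sigma> \<sigma>' \<eta>0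
    using cov1 that unfolding P_def Q_def by blast
  have c2a: "E (st (m \<sigma>) * u \<eta>0 * m \<sigma>') = ga_scale (complex_of_real c) (ga_basis k \<eta>')"
    if "\<sigma> \<in> Q" "\<sigma>' \<in> Q" "\<eta>0 \<in> P" "\<eta>' \<in> P" "\<sigma> = pjoin k \<eta>0 \<eta>' \<circ> \<sigma>'" for \<sigma> \<sigma>' \<eta>0 \<eta>'
    using cov2 that unfolding P_def Q_def by blast
  have c2b: "E (st (m \<sigma>) * u \<eta>0 * m \<sigma>') = (\<lambda>_. 0)"
    if "\<sigma> \<in> Q" "\<sigma>' \<in> Q" "\<eta>0 \<in> P" "\<forall>\<eta>'\<in>P. \<sigma> \<noteq> pjoin k \<eta>0 \<eta>' \<circ> \<sigma>'" for \<sigma> \<sigma>' \<eta>0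
    using cov2 that unfolding P_def Q_def by blast
  have c3a: "E (m \<sigma> * u \<eta>0 * m \<sigma>') = ga_scale c' (ga_basis k \<eta>')"
    if "\<sigma> \<in> Q" "\<sigma>' \<in> Q" "\<eta>0 \<in> P" "\<eta>' \<in> P" "\<sigma> = ptau k \<circ> pjoin k \<eta>0 \<eta>' \<circ> \<sigma>'" for \<sigma> \<sigma>' \<eta>0 \<eta>'
    using cov3 that unfolding P_def Q_def by blast
  have c3b: "E (m \<sigma> * u \<eta>0 * m \<sigma>') = (\<lambda>_. 0)"
    if "\<sigma> \<in> Q" "\<sigma>' \<in> Q" "\<eta>0 \<in> P" "\<forall>\<eta>'\<in>P. \<sigma> \<noteq> ptau k \<circ> pjoin k \<eta>0 \<eta>' \<circ> \<sigma>'" for \<sigma> \<sigma>' \<eta>0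
    using cov3 that unfolding P_def Q_def by blast
  have stu: "st (u \<eta>0) = u (inv \<eta>0)" if "\<eta>0 \<in> P" for \<eta>0
    using contains that by (simp add: contains_group_algebra_def P_def)
  have bijQ: "bij \<sigma>" if "\<sigma> \<in> Q" for \<sigma> using that by (simp add: Q_def perm_bij)
  have bijP: "bij \<sigma>" if "\<sigma> \<in> P" for \<sigma> using that by (simp add: P_def perm_bij)
  have pjP: "pjoin k a b \<in> Q" if "a \<in> P" "b \<in> P" for a b
    using that by (simp add: P_def Q_def pjoin_perms)
  have compQ: "a \<circ> b \<in> Q" if "a \<in> Q" "b \<in> Q" for a b
    using that by (simp add: Q_def comp_perms)
  have tauQ: "ptau k \<in> Q" by (simp add: Q_def ptau_perms)
  have pjE: "pjoin k a b = a \<circ> ptau k \<circ> b \<circ> ptau k" if "a \<in> P" "b \<in> P" for a b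
    using that by (simp add: P_def pjoin_eq)

  have I1: "(\<Sum>\<sigma>\<in>Q. ga_scale (\<alpha> \<sigma>) (E (m \<sigma> * u \<eta> * st (m \<sigma>'))))
      = (\<Sum>\<eta>'\<in>P. ga_scale (\<alpha> (pjoin k \<eta>' \<eta> \<circ> \<sigma>') * complex_of_real c) (ga_basis k \<eta>'))"
    if hs: "\<sigma>' \<in> Q" for \<alpha> \<sigma>'
  proof (rule sum_pick[OF finQ, where g = "\<lambda>\<eta>'. pjoin k \<eta>' \<eta> \<circ> \<sigma>'"])
    show "(\<lambda>\<eta>'. pjoin k \<eta>' \<eta> \<circ> \<sigma>') ` P \<subseteq> Q" using hs hP pjP compQ by auto
    show "inj_on (\<lambda>\<eta>'. pjoin k \<eta>' \<eta> \<circ> \<sigma>') P"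
    proof (rule inj_onI)
      fix a b assume a: "a \<in> P" and b: "b \<in> P" and eq: "pjoin k a \<eta> \<circ> \<sigma>' = pjoin k b \<eta> \<circ> \<sigma>'"
      have "a \<circ> (ptau k \<circ> \<eta> \<circ> ptau k \<circ> \<sigma>') = b \<circ> (ptau k \<circ> \<eta> \<circ> ptau k \<circ> \<sigma>')"
        using eq by (simp add: pjE a b hP o_assoc)
      moreover have "surj (ptau k \<circ> \<eta> \<circ> ptau k \<circ> \<sigma>')"
        by (intro bij_is_surj bij_comp bijQ bijP hs hP ptau_bij)
      ultimately show "a = b" using cancel_R by blast
    qed
    show "ga_scale (\<alpha> (pjoin k a \<eta> \<circ> \<sigma>')) (E (m (pjoin k a \<eta> \<circ> \<sigma>') * u \<eta> * st (m \<sigma>')))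
        = ga_scale (\<alpha> (pjoin k a \<eta> \<circ> \<sigma>') * complex_of_real c) (ga_basis k a)" if a: "a \<in> P" for a
      using c1a[OF compQ[OF pjP[OF a hP] hs] hs hP a refl] by (simp add: ga_scale_scale)
    show "ga_scale (\<alpha> b) (E (m b * u \<eta> * st (m \<sigma>'))) = 0"
      if "b \<in> Q" "b \<notin> (\<lambda>\<eta>'. pjoin k \<eta>' \<eta> \<circ> \<sigma>') ` P" for b
    proof -
      have "\<forall>\<eta>'\<in>P. b \<noteq> pjoin k \<eta>' \<eta> \<circ> \<sigma>'" using that(2) by blast
      thus ?thesis by (simp add: c1b[OF that(1) hs hP] ga_scale_zero)
    qed
  qed

  have I2: "(\<Sum>\<sigma>\<in>Q. ga_scale (\<alpha> \<sigma>) (E (st (m \<sigma>) * u \<eta> * m \<sigma>')))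
      = (\<Sum>\<eta>'\<in>P. ga_scale (\<alpha> (pjoin k \<eta> \<eta>' \<circ> \<sigma>') * complex_of_real c) (ga_basis k \<eta>'))"
    if hs: "\<sigma>' \<in> Q" for \<alpha> \<sigma>'
  proof (rule sum_pick[OF finQ, where g = "\<lambda>\<eta>'. pjoin k \<eta> \<eta>' \<circ> \<sigma>'"])
    show "(\<lambda>\<eta>'. pjoin k \<eta> \<eta>' \<circ> \<sigma>') ` P \<subseteq> Q" using hs hP pjP compQ by auto
    show "inj_on (\<lambda>\<eta>'. pjoin k \<eta> \<eta>' \<circ> \<sigma>') P"
    proof (rule inj_onI)
      fix a b assume a: "a \<in> P" and b: "b \<in> P" and eq: "pjoin k \<eta> a \<circ> \<sigma>' = pjoin k \<eta> b \<circ> \<sigma>'"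
      have "(\<eta> \<circ> ptau k) \<circ> a \<circ> (ptau k \<circ> \<sigma>') = (\<eta> \<circ> ptau k) \<circ> b \<circ> (ptau k \<circ> \<sigma>')"
        using eq by (simp add: pjE a b hP o_assoc)
      moreover have "surj (ptau k \<circ> \<sigma>')"
        by (intro bij_is_surj bij_comp bijQ hs ptau_bij)
      moreover have "inj (\<eta> \<circ> ptau k)"
        by (intro bij_is_inj bij_comp bijP hP ptau_bij)
      ultimately show "a = b" using cancel_LR by blast
    qed
    show "ga_scale (\<alpha> (pjoin k \<eta> a \<circ> \<sigma>')) (E (st (m (pjoin k \<eta> a \<circ> \<sigma>')) * u \<eta> * m \<sigma>'))
        = ga_scale (\<alpha> (pjoin k \<eta> a \<circ> \<sigma>') * complex_of_real c) (ga_basis k a)" if a: "a \<in> P" for a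
      using c2a[OF compQ[OF pjP[OF hP a] hs] hs hP a refl] by (simp add: ga_scale_scale)
    show "ga_scale (\<alpha> b) (E (st (m b) * u \<eta> * m \<sigma>')) = 0"
      if "b \<in> Q" "b \<notin> (\<lambda>\<eta>'. pjoin k \<eta> \<eta>' \<circ> \<sigma>') ` P" for b
    proof -
      have "\<forall>\<eta>'\<in>P. b \<noteq> pjoin k \<eta> \<eta>' \<circ> \<sigma>'" using that(2) by blast
      thus ?thesis by (simp add: c2b[OF that(1) hs hP] ga_scale_zero)
    qed
  qed

  have I3: "(\<Sum>\<sigma>\<in>Q. ga_scale (\<alpha> \<sigma>) (E (m \<sigma> * u \<eta>0 * m \<sigma>')))
      = (\<Sum>\<eta>'\<in>P. ga_scale (\<alpha> (ptau k \<circ> pjoin k \<eta>0 \<eta>' \<circ> \<sigma>') * c') (ga_basis k \<eta>'))"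
    if hs: "\<sigma>' \<in> Q" and h0: "\<eta>0 \<in> P" for \<alpha> \<sigma>' \<eta>0
  proof (rule sum_pick[OF finQ, where g = "\<lambda>\<eta>'. ptau k \<circ> pjoin k \<eta>0 \<eta>' \<circ> \<sigma>'"])
    show "(\<lambda>\<eta>'. ptau k \<circ> pjoin k \<eta>0 \<eta>' \<circ> \<sigma>') ` P \<subseteq> Q" using hs h0 pjP compQ tauQ by auto
    show "inj_on (\<lambda>\<eta>'. ptau k \<circ> pjoin k \<eta>0 \<eta>' \<circ> \<sigma>') P"
    proof (rule inj_onI)
      fix a b assume a: "a \<in> P" and b: "b \<in> P" and eq: "ptau k \<circ> pjoin k \<eta>0 a \<circ> \<sigma>' = ptau k \<circ> pjoin k \<eta>0 b \<circ> \<sigma>'"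
      have "(ptau k \<circ> \<eta>0 \<circ> ptau k) \<circ> a \<circ> (ptau k \<circ> \<sigma>') = (ptau k \<circ> \<eta>0 \<circ> ptau k) \<circ> b \<circ> (ptau k \<circ> \<sigma>')"
        using eq by (simp add: pjE a b h0 o_assoc)
      moreover have "surj (ptau k \<circ> \<sigma>')"
        by (intro bij_is_surj bij_comp bijQ hs ptau_bij)
      moreover have "inj (ptau k \<circ> \<eta>0 \<circ> ptau k)"
        by (intro bij_is_inj bij_comp bijP h0 ptau_bij)
      ultimately show "a = b" using cancel_LR by blast
    qed
    show "ga_scale (\<alpha> (ptau k \<circ> pjoin k \<eta>0 a \<circ> \<sigma>')) (E (m (ptau k \<circ> pjoin k \<eta>0 a \<circ> \<sigma>') * u \<eta>0 * m \<sigma>'))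
        = ga_scale (\<alpha> (ptau k \<circ> pjoin k \<eta>0 a \<circ> \<sigma>') * c') (ga_basis k a)" if a: "a \<in> P" for a
      using c3a[OF compQ[OF compQ[OF tauQ pjP[OF h0 a]] hs] hs h0 a refl] by (simp add: ga_scale_scale)
    show "ga_scale (\<alpha> b) (E (m b * u \<eta>0 * m \<sigma>')) = 0"
      if "b \<in> Q" "b \<notin> (\<lambda>\<eta>'. ptau k \<circ> pjoin k \<eta>0 \<eta>' \<circ> \<sigma>') ` P" for b
    proof -
      have "\<forall>\<eta>'\<in>P. b \<noteq> ptau k \<circ> pjoin k \<eta>0 \<eta>' \<circ> \<sigma>'" using that(2) by blast
      thus ?thesis by (simp add: c3b[OF that(1) hs h0] ga_scale_zero)
    qed
  qed

  have I4: "(\<Sum>\<sigma>'\<in>Q. E (st (m \<sigma>) * u \<eta> * st (m \<sigma>')))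
      = (\<Sum>\<eta>'\<in>P. ga_scale (cnj c') (ga_basis k \<eta>'))"
    if hs: "\<sigma> \<in> Q" for \<sigma>
  proof -
    have "E (st (m \<sigma>) * u \<eta> * st (m \<sigma>')) = ga_star k (E (m \<sigma>' * u (inv \<eta>) * m \<sigma>))" for \<sigma>'
    proof -
      have "st (m \<sigma>' * u (inv \<eta>) * m \<sigma>) = st (m \<sigma>) * u \<eta> * st (m \<sigma>')"
        using stu[OF ih\<eta>] perms_inv_inv[OF h\<eta>] by (simp add: st_mult[OF alg] mult.assoc)
      thus ?thesis using E_star_fun[OF E alg] by metis
    qed
    hence "(\<Sum>\<sigma>'\<in>Q. E (st (m \<sigma>) * u \<eta> * st (m \<sigma>'))) = (\<Sum>\<sigma>'\<in>Q. ga_star k (E (m \<sigma>' * u (inv \<eta>) * m \<sigma>)))"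
      by simp
    also have "\<dots> = (\<Sum>\<eta>'\<in>P. ga_scale (cnj c') (ga_basis k (inv \<eta>')))"
    proof (rule sum_pick[OF finQ, where g = "\<lambda>\<eta>'. ptau k \<circ> pjoin k (inv \<eta>) \<eta>' \<circ> \<sigma>"])
      show "(\<lambda>\<eta>'. ptau k \<circ> pjoin k (inv \<eta>) \<eta>' \<circ> \<sigma>) ` P \<subseteq> Q" using hs ih\<eta> pjP compQ tauQ by auto
      show "inj_on (\<lambda>\<eta>'. ptau k \<circ> pjoin k (inv \<eta>) \<eta>' \<circ> \<sigma>) P"
      proof (rule inj_onI)
        fix a b assume a: "a \<in> P" and b: "b \<in> P" and eq: "ptau k \<circ> pjoin k (inv \<eta>) a \<circ> \<sigma> = ptau k \<circ> pjoin k (inv \<eta>) b \<circ> \<sigma>"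
        have "(ptau k \<circ> inv \<eta> \<circ> ptau k) \<circ> a \<circ> (ptau k \<circ> \<sigma>) = (ptau k \<circ> inv \<eta> \<circ> ptau k) \<circ> b \<circ> (ptau k \<circ> \<sigma>)"
          using eq by (simp add: pjE a b ih\<eta> o_assoc)
        moreover have "surj (ptau k \<circ> \<sigma>)"
          by (intro bij_is_surj bij_comp bijQ hs ptau_bij)
        moreover have "inj (ptau k \<circ> inv \<eta> \<circ> ptau k)"
          by (intro bij_is_inj bij_comp bijP ih\<eta> ptau_bij)
        ultimately show "a = b" using cancel_LR by blast
      qed
      show "ga_star k (E (m (ptau k \<circ> pjoin k (inv \<eta>) a \<circ> \<sigma>) * u (inv \<eta>) * m \<sigma>))
          = ga_scale (cnj c') (ga_basis k (inv a))" if a: "a \<in> P" for a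
        using c3a[OF compQ[OF compQ[OF tauQ pjP[OF ih\<eta> a]] hs] hs ih\<eta> a refl] a
        by (simp add: ga_star_basis P_def)
      show "ga_star k (E (m b * u (inv \<eta>) * m \<sigma>)) = 0"
        if "b \<in> Q" "b \<notin> (\<lambda>\<eta>'. ptau k \<circ> pjoin k (inv \<eta>) \<eta>' \<circ> \<sigma>) ` P" for b
      proof -
        have "\<forall>\<eta>'\<in>P. b \<noteq> ptau k \<circ> pjoin k (inv \<eta>) \<eta>' \<circ> \<sigma>" using that(2) by blast
        thus ?thesis by (simp add: c3b[OF that(1) hs ih\<eta>] ga_star_zero)
      qed
    qed
    also have "\<dots> = (\<Sum>\<eta>'\<in>P. ga_scale (cnj c') (ga_basis k \<eta>'))"
      unfolding P_def by (rule basis_inv_sum)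
    finally show ?thesis .
  qed
  define r1 where "r1 = complex_of_real (1 / sqrt (fact (2*k) * fact k * c))"
  define r3 where "r3 = complex_of_real (1 / sqrt (2 * fact (2*k) * fact k * (c + Re c')))"
  define X where "X = (\<Sum>\<sigma>\<in>Q. scC 1 (m \<sigma>))"
  define Xs where "Xs = (\<Sum>\<sigma>\<in>Q. scC 1 (st (m \<sigma>)))"
  define Z where "Z = (\<Sum>\<sigma>\<in>Q. scC (of_int (sign \<sigma>)) (m \<sigma>))"
  define Zs where "Zs = (\<Sum>\<sigma>\<in>Q. scC (of_int (sign \<sigma>)) (st (m \<sigma>)))"
  have cr1: "cnj r1 = r1" by (simp add: r1_def)
  have s1': "s1 = scC r1 X" by (simp add: s1 r1_def X_def Q_def scC_one[OF alg])
  have st1: "st s1 = scC r1 Xs" unfolding s1' X_def Xs_def st_form[OF alg] by (simp add: cr1)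
  have s2': "s2 = scC r1 Z" by (simp add: s2 r1_def Z_def Q_def)
  have st2: "st s2 = scC r1 Zs" unfolding s2' Z_def Zs_def st_form[OF alg] by (simp add: cr1)
  have s3': "s3 = scC r3 X + scC r3 Xs"
    by (simp add: s3 r3_def X_def Xs_def Q_def scC_one[OF alg] sum.distrib scC_add[OF alg])
  have EX: "E (scC ra (\<Sum>\<sigma>\<in>Q. scC (\<alpha> \<sigma>) (f \<sigma>)) * u \<eta> * scC rb (\<Sum>\<sigma>'\<in>Q. scC (\<beta> \<sigma>') (g \<sigma>')))
      = ga_scale (ra*rb) (\<Sum>\<sigma>\<in>Q. \<Sum>\<sigma>'\<in>Q. ga_scale (\<alpha> \<sigma> * \<beta> \<sigma>') (E (f \<sigma> * u \<eta> * g \<sigma>')))"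
    for ra rb \<alpha> \<beta> f g
    by (simp only: expand[OF alg] E_scC[OF E] E_sum[OF E])
  have BS: "(\<Sum>\<eta>'\<in>P. ga_scale (\<gamma> \<eta>') (ga_basis k \<eta>')) = (\<lambda>\<xi>. if \<xi> \<in> P then \<gamma> \<xi> else 0)" for \<gamma>
    unfolding P_def by (rule basis_sum)
  have CS: "ga_scale R (\<Sum>\<sigma>'\<in>Q. (\<lambda>\<xi>. if \<xi> \<in> P then v \<xi> else 0))
     = (\<lambda>\<xi>. if \<xi> \<in> P then R * (fact (2*k) * v \<xi>) else 0)" for R v
    unfolding P_def Q_def by (rule const_sum)
  have N1: "r1 * r1 * (fact (2*k) * (a * complex_of_real c)) = a / fact k" for a
    unfolding r1_def by (rule numf) (use c_pos in auto)
  have sgn1: "(of_int (sign (pjoin k \<eta>' \<eta> \<circ> \<sigma>')) * of_int (sign \<sigma>') :: complex) = of_int (sign \<eta>) * of_int (sign \<eta>')"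
    if "\<eta>' \<in> P" "\<sigma>' \<in> Q" for \<eta>' \<sigma>'
  proof -
    have "sign (pjoin k \<eta>' \<eta> \<circ> \<sigma>') * sign \<sigma>' = sign \<eta>' * sign \<eta> * (sign \<sigma>' * sign \<sigma>')"
      using that hP pjP[OF that(1) hP]
      by (simp add: sign_compose perm_permutation sign_pjoin P_def Q_def)
    hence "sign (pjoin k \<eta>' \<eta> \<circ> \<sigma>') * sign \<sigma>' = sign \<eta> * sign \<eta>'" by simp
    thus ?thesis by (metis of_int_mult)
  qed
  have sgn2: "(of_int (sign (pjoin k \<eta> \<eta>' \<circ> \<sigma>')) * of_int (sign \<sigma>') :: complex) = of_int (sign \<eta>) * of_int (sign \<eta>')"
    if "\<eta>' \<in> P" "\<sigma>' \<in> Q" for \<eta>' \<sigma>'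
  proof -
    have "sign (pjoin k \<eta> \<eta>' \<circ> \<sigma>') * sign \<sigma>' = sign \<eta> * sign \<eta>' * (sign \<sigma>' * sign \<sigma>')"
      using that hP pjP[OF hP that(1)]
      by (simp add: sign_compose perm_permutation sign_pjoin P_def Q_def)
    hence "sign (pjoin k \<eta> \<eta>' \<circ> \<sigma>') * sign \<sigma>' = sign \<eta> * sign \<eta>'" by simp
    thus ?thesis by (metis of_int_mult)
  qed
  have RHS1: "(\<Sum>\<eta>'\<in>perms k. ga_scale (1 / fact k) (ga_basis k \<eta>')) = (\<lambda>\<xi>. if \<xi> \<in> P then 1 / fact k else 0)"
    unfolding P_def by (rule basis_sum)
  have RHS2: "(\<Sum>\<eta>'\<in>perms k. ga_scale (of_int (sign \<eta>) * of_int (sign \<eta>') / fact k) (ga_basis k \<eta>'))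
      = (\<lambda>\<xi>. if \<xi> \<in> P then of_int (sign \<eta>) * of_int (sign \<xi>) / fact k else 0)"
    unfolding P_def by (rule basis_sum)

  have "E (s1 * u \<eta> * st s1) = ga_scale (r1*r1) (\<Sum>\<sigma>\<in>Q. \<Sum>\<sigma>'\<in>Q. ga_scale (1 * 1) (E (m \<sigma> * u \<eta> * st (m \<sigma>'))))"
    unfolding st1 unfolding s1' X_def Xs_def by (rule EX)
  also have "\<dots> = ga_scale (r1*r1) (\<Sum>\<sigma>'\<in>Q. \<Sum>\<sigma>\<in>Q. ga_scale (1 * 1) (E (m \<sigma> * u \<eta> * st (m \<sigma>'))))"
    by (subst sum.swap) (rule refl)
  also have "\<dots> = ga_scale (r1*r1) (\<Sum>\<sigma>'\<in>Q. \<Sum>\<eta>'\<in>P. ga_scale (1 * 1 * complex_of_real c) (ga_basis k \<eta>'))"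
    by (intro arg_cong[where f="ga_scale (r1*r1)"] sum.cong refl I1)
  also have "\<dots> = (\<lambda>\<xi>. if \<xi> \<in> P then r1 * r1 * (fact (2*k) * (1 * 1 * complex_of_real c)) else 0)"
    unfolding BS CS ..
  finally have R1: "E (s1 * u \<eta> * st s1) = (\<Sum>\<eta>'\<in>perms k. ga_scale (1 / fact k) (ga_basis k \<eta>'))"
    unfolding RHS1 N1 by (simp cong: if_cong)

  have "E (st s1 * u \<eta> * s1) = ga_scale (r1*r1) (\<Sum>\<sigma>\<in>Q. \<Sum>\<sigma>'\<in>Q. ga_scale (1 * 1) (E (st (m \<sigma>) * u \<eta> * m \<sigma>')))"
    unfolding st1 unfolding s1' X_def Xs_def by (rule EX)
  also have "\<dots> = ga_scale (r1*r1) (\<Sum>\<sigma>'\<in>Q. \<Sum>\<sigma>\<in>Q. ga_scale (1 * 1) (E (st (m \<sigma>) * u \<eta> * m \<sigma>')))"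
    by (subst sum.swap) (rule refl)
  also have "\<dots> = ga_scale (r1*r1) (\<Sum>\<sigma>'\<in>Q. \<Sum>\<eta>'\<in>P. ga_scale (1 * 1 * complex_of_real c) (ga_basis k \<eta>'))"
    by (intro arg_cong[where f="ga_scale (r1*r1)"] sum.cong refl I2)
  also have "\<dots> = (\<lambda>\<xi>. if \<xi> \<in> P then r1 * r1 * (fact (2*k) * (1 * 1 * complex_of_real c)) else 0)"
    unfolding BS CS ..
  finally have R2: "E (st s1 * u \<eta> * s1) = (\<Sum>\<eta>'\<in>perms k. ga_scale (1 / fact k) (ga_basis k \<eta>'))"
    unfolding RHS1 N1 by (simp cong: if_cong)

  have "E (s2 * u \<eta> * st s2) = ga_scale (r1*r1) (\<Sum>\<sigma>\<in>Q. \<Sum>\<sigma>'\<in>Q. ga_scale (of_int (sign \<sigma>) * of_int (sign \<sigma>')) (E (m \<sigma> * u \<eta> * st (m \<sigma>'))))"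
    unfolding st2 unfolding s2' Z_def Zs_def by (rule EX)
  also have "\<dots> = ga_scale (r1*r1) (\<Sum>\<sigma>'\<in>Q. \<Sum>\<sigma>\<in>Q. ga_scale (of_int (sign \<sigma>) * of_int (sign \<sigma>')) (E (m \<sigma> * u \<eta> * st (m \<sigma>'))))"
    by (subst sum.swap) (rule refl)
  also have "\<dots> = ga_scale (r1*r1) (\<Sum>\<sigma>'\<in>Q. \<Sum>\<eta>'\<in>P. ga_scale (of_int (sign (pjoin k \<eta>' \<eta> \<circ> \<sigma>')) * of_int (sign \<sigma>') * complex_of_real c) (ga_basis k \<eta>'))"
    by (intro arg_cong[where f="ga_scale (r1*r1)"] sum.cong refl I1)
  also have "\<dots> = ga_scale (r1*r1) (\<Sum>\<sigma>'\<in>Q. \<Sum>\<eta>'\<in>P. ga_scale (of_int (sign \<eta>) * of_int (sign \<eta>') * complex_of_real c) (ga_basis k \<eta>'))"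
    by (intro arg_cong[where f="ga_scale (r1*r1)"] sum.cong refl) (simp add: sgn1)
  also have "\<dots> = (\<lambda>\<xi>. if \<xi> \<in> P then r1 * r1 * (fact (2*k) * (of_int (sign \<eta>) * of_int (sign \<xi>) * complex_of_real c)) else 0)"
    unfolding BS CS ..
  finally have R3: "E (s2 * u \<eta> * st s2) = (\<Sum>\<eta>'\<in>perms k. ga_scale (of_int (sign \<eta>) * of_int (sign \<eta>') / fact k) (ga_basis k \<eta>'))"
    unfolding RHS2 N1 by (simp cong: if_cong)

  have "E (st s2 * u \<eta> * s2) = ga_scale (r1*r1) (\<Sum>\<sigma>\<in>Q. \<Sum>\<sigma>'\<in>Q. ga_scale (of_int (sign \<sigma>) * of_int (sign \<sigma>')) (E (st (m \<sigma>) * u \<eta> * m \<sigma>')))"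
    unfolding st2 unfolding s2' Z_def Zs_def by (rule EX)
  also have "\<dots> = ga_scale (r1*r1) (\<Sum>\<sigma>'\<in>Q. \<Sum>\<sigma>\<in>Q. ga_scale (of_int (sign \<sigma>) * of_int (sign \<sigma>')) (E (st (m \<sigma>) * u \<eta> * m \<sigma>')))"
    by (subst sum.swap) (rule refl)
  also have "\<dots> = ga_scale (r1*r1) (\<Sum>\<sigma>'\<in>Q. \<Sum>\<eta>'\<in>P. ga_scale (of_int (sign (pjoin k \<eta> \<eta>' \<circ> \<sigma>')) * of_int (sign \<sigma>') * complex_of_real c) (ga_basis k \<eta>'))"
    by (intro arg_cong[where f="ga_scale (r1*r1)"] sum.cong refl I2)
  also have "\<dots> = ga_scale (r1*r1) (\<Sum>\<sigma>'\<in>Q. \<Sum>\<eta>'\<in>P. ga_scale (of_int (sign \<eta>) * of_int (sign \<eta>') * complex_of_real c) (ga_basis k \<eta>'))"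
    by (intro arg_cong[where f="ga_scale (r1*r1)"] sum.cong refl) (simp add: sgn2)
  also have "\<dots> = (\<lambda>\<xi>. if \<xi> \<in> P then r1 * r1 * (fact (2*k) * (of_int (sign \<eta>) * of_int (sign \<xi>) * complex_of_real c)) else 0)"
    unfolding BS CS ..
  finally have R4: "E (st s2 * u \<eta> * s2) = (\<Sum>\<eta>'\<in>perms k. ga_scale (of_int (sign \<eta>) * of_int (sign \<eta>') / fact k) (ga_basis k \<eta>'))"
    unfolding RHS2 N1 by (simp cong: if_cong)

  have R5: "E (s3 * u \<eta> * s3) = (\<Sum>\<eta>'\<in>perms k. ga_scale (1 / fact k) (ga_basis k \<eta>'))"
    if pos: "c + Re c' > 0"
  proof -
    have T11: "E (scC r3 X * u \<eta> * scC r3 X) = (\<lambda>\<xi>. if \<xi> \<in> P then r3 * r3 * (fact (2*k) * (1 * 1 * c')) else 0)"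
    proof -
      have "E (scC r3 X * u \<eta> * scC r3 X) = ga_scale (r3*r3) (\<Sum>\<sigma>\<in>Q. \<Sum>\<sigma>'\<in>Q. ga_scale (1 * 1) (E (m \<sigma> * u \<eta> * m \<sigma>')))"
        unfolding X_def by (rule EX)
      also have "\<dots> = ga_scale (r3*r3) (\<Sum>\<sigma>'\<in>Q. \<Sum>\<sigma>\<in>Q. ga_scale (1 * 1) (E (m \<sigma> * u \<eta> * m \<sigma>')))"
        by (subst sum.swap) (rule refl)
      also have "\<dots> = ga_scale (r3*r3) (\<Sum>\<sigma>'\<in>Q. \<Sum>\<eta>'\<in>P. ga_scale (1 * 1 * c') (ga_basis k \<eta>'))"
        by (intro arg_cong[where f="ga_scale (r3*r3)"] sum.cong refl I3 hP)
      also have "\<dots> = (\<lambda>\<xi>. if \<xi> \<in> P then r3 * r3 * (fact (2*k) * (1 * 1 * c')) else 0)"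
        unfolding BS CS ..
      finally show ?thesis .
    qed
    have T12: "E (scC r3 X * u \<eta> * scC r3 Xs) = (\<lambda>\<xi>. if \<xi> \<in> P then r3 * r3 * (fact (2*k) * (1 * 1 * complex_of_real c)) else 0)"
    proof -
      have "E (scC r3 X * u \<eta> * scC r3 Xs) = ga_scale (r3*r3) (\<Sum>\<sigma>\<in>Q. \<Sum>\<sigma>'\<in>Q. ga_scale (1 * 1) (E (m \<sigma> * u \<eta> * st (m \<sigma>'))))"
        unfolding X_def Xs_def by (rule EX)
      also have "\<dots> = ga_scale (r3*r3) (\<Sum>\<sigma>'\<in>Q. \<Sum>\<sigma>\<in>Q. ga_scale (1 * 1) (E (m \<sigma> * u \<eta> * st (m \<sigma>'))))"
        by (subst sum.swap) (rule refl)
      also have "\<dots> = ga_scale (r3*r3) (\<Sum>\<sigma>'\<in>Q. \<Sum>\<eta>'\<in>P. ga_scale (1 * 1 * complex_of_real c) (ga_basis k \<eta>'))"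
        by (intro arg_cong[where f="ga_scale (r3*r3)"] sum.cong refl I1)
      also have "\<dots> = (\<lambda>\<xi>. if \<xi> \<in> P then r3 * r3 * (fact (2*k) * (1 * 1 * complex_of_real c)) else 0)"
        unfolding BS CS ..
      finally show ?thesis .
    qed
    have T21: "E (scC r3 Xs * u \<eta> * scC r3 X) = (\<lambda>\<xi>. if \<xi> \<in> P then r3 * r3 * (fact (2*k) * (1 * 1 * complex_of_real c)) else 0)"
    proof -
      have "E (scC r3 Xs * u \<eta> * scC r3 X) = ga_scale (r3*r3) (\<Sum>\<sigma>\<in>Q. \<Sum>\<sigma>'\<in>Q. ga_scale (1 * 1) (E (st (m \<sigma>) * u \<eta> * m \<sigma>')))"
        unfolding X_def Xs_def by (rule EX)
      also have "\<dots> = ga_scale (r3*r3) (\<Sum>\<sigma>'\<in>Q. \<Sum>\<sigma>\<in>Q. ga_scale (1 * 1) (E (st (m \<sigma>) * u \<eta> * m \<sigma>')))"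
        by (subst sum.swap) (rule refl)
      also have "\<dots> = ga_scale (r3*r3) (\<Sum>\<sigma>'\<in>Q. \<Sum>\<eta>'\<in>P. ga_scale (1 * 1 * complex_of_real c) (ga_basis k \<eta>'))"
        by (intro arg_cong[where f="ga_scale (r3*r3)"] sum.cong refl I2)
      also have "\<dots> = (\<lambda>\<xi>. if \<xi> \<in> P then r3 * r3 * (fact (2*k) * (1 * 1 * complex_of_real c)) else 0)"
        unfolding BS CS ..
      finally show ?thesis .
    qed
    have T22: "E (scC r3 Xs * u \<eta> * scC r3 Xs) = (\<lambda>\<xi>. if \<xi> \<in> P then r3 * r3 * (fact (2*k) * cnj c') else 0)"
    proof -
      have "E (scC r3 Xs * u \<eta> * scC r3 Xs) = ga_scale (r3*r3) (\<Sum>\<sigma>\<in>Q. \<Sum>\<sigma>'\<in>Q. ga_scale (1 * 1) (E (st (m \<sigma>) * u \<eta> * st (m \<sigma>'))))"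
        unfolding Xs_def by (rule EX)
      also have "\<dots> = ga_scale (r3*r3) (\<Sum>\<sigma>\<in>Q. \<Sum>\<sigma>'\<in>Q. E (st (m \<sigma>) * u \<eta> * st (m \<sigma>')))"
        by simp
      also have "\<dots> = ga_scale (r3*r3) (\<Sum>\<sigma>\<in>Q. \<Sum>\<eta>'\<in>P. ga_scale (cnj c') (ga_basis k \<eta>'))"
        by (intro arg_cong[where f="ga_scale (r3*r3)"] sum.cong refl I4)
      also have "\<dots> = (\<lambda>\<xi>. if \<xi> \<in> P then r3 * r3 * (fact (2*k) * cnj c') else 0)"
        unfolding BS CS ..
      finally show ?thesis .
    qed
    have dist: "s3 * u \<eta> * s3 = scC r3 X * u \<eta> * scC r3 X + scC r3 X * u \<eta> * scC r3 Xs
        + (scC r3 Xs * u \<eta> * scC r3 X + scC r3 Xs * u \<eta> * scC r3 Xs)"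
      unfolding s3' by (simp add: algebra_simps)
    have N3: "r3 * r3 * (fact (2*k) * (1 * 1 * c')) + r3 * r3 * (fact (2*k) * (1 * 1 * complex_of_real c))
        + (r3 * r3 * (fact (2*k) * (1 * 1 * complex_of_real c)) + r3 * r3 * (fact (2*k) * cnj c')) = 1 / fact k"
    proof -
      have nf: "r3 * r3 * (fact (2*k) * (1 * complex_of_real (2 * (c + Re c')))) = 1 / fact k"
        unfolding r3_def by (rule numf) (use pos in auto)
      have cc: "c' + cnj c' = complex_of_real (2 * Re c')" by (rule complex_add_cnj)
      have A: "r3 * r3 * (fact (2*k) * (1 * 1 * c')) + r3 * r3 * (fact (2*k) * (1 * 1 * complex_of_real c))
        + (r3 * r3 * (fact (2*k) * (1 * 1 * complex_of_real c)) + r3 * r3 * (fact (2*k) * cnj c'))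
        = r3 * r3 * (fact (2*k) * (c' + cnj c' + 2 * complex_of_real c))" by (simp add: algebra_simps)
      have B: "c' + cnj c' + 2 * complex_of_real c = 1 * complex_of_real (2 * (c + Re c'))"
        unfolding cc by (simp add: algebra_simps)
      show ?thesis unfolding A B nf ..
    qed
    show ?thesis
      unfolding RHS1 dist E_add[OF E] T11 T12 T21 T22
      apply (rule ext)
      subgoal for \<xi> by (cases "\<xi> \<in> P") (simp_all only: plus_fun_apply if_True if_False N3 add_0_left add_0_right)
      done
  qed
  show "E (s1 * u \<eta> * st s1) = (\<Sum>\<eta>'\<in>perms k. ga_scale (1 / fact k) (ga_basis k \<eta>')) \<and>
      E (st s1 * u \<eta> * s1) = (\<Sum>\<eta>'\<in>perms k. ga_scale (1 / fact k) (ga_basis k \<eta>')) \<and>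
      (c + Re c' > 0 \<longrightarrow>
         E (s3 * u \<eta> * s3) = (\<Sum>\<eta>'\<in>perms k. ga_scale (1 / fact k) (ga_basis k \<eta>'))) \<and>
      E (s2 * u \<eta> * st s2) =
         (\<Sum>\<eta>'\<in>perms k. ga_scale (of_int (sign \<eta>) * of_int (sign \<eta>') / fact k) (ga_basis k \<eta>')) \<and>
      E (st s2 * u \<eta> * s2) =
         (\<Sum>\<eta>'\<in>perms k. ga_scale (of_int (sign \<eta>) * of_int (sign \<eta>') / fact k) (ga_basis k \<eta>'))"
    using R1 R2 R3 R4 R5 by blast
qed


end
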